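(* Let $f$ be an entire function in the Eremenko–Lyubich class $\mathcal B$ having only finitely many tracts over infinity. If the tracts of $f$ are Hölder, then $f$ has negative spectrum, i.e. $b_\infty(t)<0$ for all $t>\Theta_f$.
   Context: Notation: $\mathbb D_R=\{|z|<R\}$, $\mathbb D_R^*=\{|z|>R\}$, $\mathcal H=\{\Re \xi>0\}$. For an entire $f$, $S(f)$ is the closure of the set of critical values and finite asymptotic values; $f\in\mathcal B$ means $S(f)$ is bounded. For $R>0$ with $S(f)\subset\mathbb D_R$, every component $\Omega_j$ of $f^{-1}(\mathbb D_R^* )$ (a tract) is an unbounded simply connected domain on which $f=R\exp\circ\tau_j$ with $\tau_j:\Omega_j\to\mathcal H$ conformal; set $\varphi_j=\tau_j^{-1}:\mathcal H\to\Omega_j$. For $T>0$ let $Q_T=\{\xi:0<\Re\xi<4T,\ -4T<\Im\xi<4T\}$. Hölder tracts: a conformal map $g$ on $Q_1$ is $(H,\alpha)$-Hölder if $|g(z_1)-g(z_2)|\le H|g'(1)||z_1-z_2|^\alpha$ for all $z_1,z_2\in Q_1$. A tract $\Omega_j$ is Hölder if (i) there is $M$ with $|\varphi_j(\xi)|\le M|\varphi_j(\xi')|$ for all $\xi,\xi'\in Q_T\setminus Q_{T/8}$ and all sufficiently large $T$, and (ii) there are $H,\alpha>0$ and $T_0\ge1$ such that $\xi\mapsto\varphi_j(T\xi)$ on $Q_1$ is $(H,\alpha)$-Hölder for every $T\ge T_0$. $f$ has Hölder tracts if for some $R\ge1$ (with $S(f)\subset \mathbb D_R$) all components of $f^{-1}(\mathbb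 D_R^* )$ are Hölder tracts. Spectrum: for each tract let $\varphi_{j,T}(\xi)=\varphi_j(T\xi)/|\varphi_j(T)|$. For a conformal map $h$ on $Q_2$, $r\in(0,1)$, $t\in\mathbb R$, put $\beta_h(r,t)=\frac{\log\int_{I}|h'(r+iy)|^t\,dy}{\log(1/r)}$ with $I=[-2,-1]\cup[1,2]$. Let $\beta_{\infty,j}(t)=\limsup_{T\to\infty}\beta_{\varphi_{j,T}}(1/T,t)$, $b_{\infty,j}(t)=\beta_{\infty,j}(t)-t+1$, $\Theta_{f,j}=\inf\{t>0:b_{\infty,j}(t)=0\}$, $b_\infty=\max_j b_{\infty,j}$, $\Theta_f=\max_j\Theta_{f,j}$. $f$ has negative spectrum if $b_\infty(t)<0$ for all $t>\Theta_f$. *)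

theory Defs
  imports "HOL-Complex_Analysis.Complex_Analysis"
begin

definition critical_values :: "(complex \<Rightarrow> complex) \<Rightarrow> complex set" where
  "critical_values f = {f z | z. deriv f z = 0}"

definition asymptotic_values :: "(complex \<Rightarrow> complex) \<Rightarrow> complex set" where
  "asymptotic_values f = {a. \<exists>\<gamma> :: real \<Rightarrow> complex.
      continuous_on {0..<1} \<gamma> \<and> filterlim \<gamma> at_infinity (at_left 1) \<and>
      ((\<lambda>s. f (\<gamma> s)) \<longlongrightarrow> a) (at_left 1)}"

definition singular_set :: "(complex \<Rightarrow> complex) \<Rightarrow> complex set" where
  "singular_set f = closure (critical_values f \<union> asymptotic_values f)"

definition class_B :: "(complex \<Rightarrow> complex) \<Rightarrow> bool" where
  "class_B f \<longleftrightarrow> f holomorphic_on UNIV \<and> bounded (singular_set f)"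

definition right_half_plane :: "complex set" where
  "right_half_plane = {\<xi>. Re \<xi> > 0}"

definition tracts :: "(complex \<Rightarrow> complex) \<Rightarrow> real \<Rightarrow> complex set set" where
  "tracts f R = components (f -` {z. norm z > R})"

definition log_coord :: "(complex \<Rightarrow> complex) \<Rightarrow> real \<Rightarrow> complex set \<Rightarrow> (complex \<Rightarrow> complex) \<Rightarrow> bool" where
  "log_coord f R \<Omega> \<tau> \<longleftrightarrow> \<tau> holomorphic_on \<Omega> \<and> bij_betw \<tau> \<Omega> right_half_plane \<and>
     (\<forall>z\<in>\<Omega>. f z = complex_of_real R * exp (\<tau> z))"

definition inv_coord :: "complex set \<Rightarrow> (complex \<Rightarrow> complex) \<Rightarrow> complex \<Rightarrow> complex" where
  "inv_coord \<Omega> \<tau> = inv_into \<Omega> \<tau>"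

definition Qbox :: "real \<Rightarrow> complex set" where
  "Qbox T = {\<xi>. 0 < Re \<xi> \<and> Re \<xi> < 4 * T \<and> - 4 * T < Im \<xi> \<and> Im \<xi> < 4 * T}"

definition holder_Q1 :: "real \<Rightarrow> real \<Rightarrow> (complex \<Rightarrow> complex) \<Rightarrow> bool" where
  "holder_Q1 H \<alpha> g \<longleftrightarrow> (\<forall>z1\<in>Qbox 1. \<forall>z2\<in>Qbox 1.
      cmod (g z1 - g z2) \<le> H * cmod (deriv g 1) * cmod (z1 - z2) powr \<alpha>)"

definition holder_tract :: "(complex \<Rightarrow> complex) \<Rightarrow> bool" where
  "holder_tract \<phi> \<longleftrightarrow>
     (\<exists>M. \<forall>\<^sub>F T in at_top. \<forall>\<xi>\<in>Qbox T - Qbox (T / 8). \<forall>\<xi>'\<in>Qbox T - Qbox (T / 8).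
          cmod (\<phi> \<xi>) \<le> M * cmod (\<phi> \<xi>')) \<and>
     (\<exists>H \<alpha> T0. H > 0 \<and> \<alpha> > 0 \<and> T0 \<ge> 1 \<and>
          (\<forall>T\<ge>T0. holder_Q1 H \<alpha> (\<lambda>\<xi>. \<phi> (complex_of_real T * \<xi>))))"

definition has_holder_tracts :: "(complex \<Rightarrow> complex) \<Rightarrow> real \<Rightarrow> (complex set \<Rightarrow> complex \<Rightarrow> complex) \<Rightarrow> bool" where
  "has_holder_tracts f R \<tau> \<longleftrightarrow>
     (\<forall>\<Omega>\<in>tracts f R. holder_tract (inv_coord \<Omega> (\<tau> \<Omega>)))"

definition I_set :: "real set" where
  "I_set = {-2..-1} \<union> {1..2}"

definition beta :: "(complex \<Rightarrow> complex) \<Rightarrow> real \<Rightarrow> real \<Rightarrow> real" where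
  "beta h r t = ln (integral I_set (\<lambda>y. cmod (deriv h (Complex r y)) powr t)) / ln (1 / r)"

definition rescaled :: "(complex \<Rightarrow> complex) \<Rightarrow> real \<Rightarrow> complex \<Rightarrow> complex" where
  "rescaled \<phi> T = (\<lambda>\<xi>. \<phi> (complex_of_real T * \<xi>) / complex_of_real (cmod (\<phi> (complex_of_real T))))"

definition beta_inf :: "(complex \<Rightarrow> complex) \<Rightarrow> real \<Rightarrow> ereal" where
  "beta_inf \<phi> t = Limsup at_top (\<lambda>T. ereal (beta (rescaled \<phi> T) (1 / T) t))"

definition b_inf_tract :: "(complex \<Rightarrow> complex) \<Rightarrow> real \<Rightarrow> ereal" where
  "b_inf_tract \<phi> t = beta_inf \<phi> t - ereal t + 1"

definition Theta_tract :: "(complex \<Rightarrow> complex) \<Rightarrow> ereal" where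
  "Theta_tract \<phi> = Inf (ereal ` {t. t > 0 \<and> b_inf_tract \<phi> t = 0})"

definition b_inf :: "(complex \<Rightarrow> complex) \<Rightarrow> real \<Rightarrow> (complex set \<Rightarrow> complex \<Rightarrow> complex) \<Rightarrow> real \<Rightarrow> ereal" where
  "b_inf f R \<tau> t = (SUP \<Omega>\<in>tracts f R. b_inf_tract (inv_coord \<Omega> (\<tau> \<Omega>)) t)"

definition Theta_f :: "(complex \<Rightarrow> complex) \<Rightarrow> real \<Rightarrow> (complex set \<Rightarrow> complex \<Rightarrow> complex) \<Rightarrow> ereal" where
  "Theta_f f R \<tau> = (SUP \<Omega>\<in>tracts f R. Theta_tract (inv_coord \<Omega> (\<tau> \<Omega>)))"

definition negative_spectrum :: "(complex \<Rightarrow> complex) \<Rightarrow> real \<Rightarrow> (complex set \<Rightarrow> complex \<Rightarrow> complex) \<Rightarrow> bool" where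
  "negative_spectrum f R \<tau> \<longleftrightarrow> (\<forall>t::real. ereal t > Theta_f f R \<tau> \<longrightarrow> b_inf f R \<tau> t < 0)"

end

theory Submission
  imports Defs
begin


lemma I_set_int:
  fixes u :: "real \<Rightarrow> real"
  assumes cont: "continuous_on I_set u" and pos: "\<And>y. y \<in> I_set \<Longrightarrow> u y > 0"
  shows "u integrable_on I_set \<and> integral I_set u > 0"
proof -
  have nn: "\<And>y. y \<in> I_set \<Longrightarrow> 0 \<le> u y" using pos less_imp_le by blast
  have c1: "continuous_on {-2..-1} u" and c2: "continuous_on {1..2::real} u"
    using cont unfolding I_set_def by (auto intro: continuous_on_subset)
  have i1: "(u has_integral integral {-2..-1} u) {-2..-1}"
    using c1 integrable_continuous_real by blast
  have i2: "(u has_integral integral {1..2} u) {1..2}"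
    using c2 integrable_continuous_real by blast
  have "(u has_integral (integral {-2..-1} u + integral {1..2} u)) I_set"
    unfolding I_set_def by (rule has_integral_Un[OF i1 i2]) auto
  moreover have "integral {-2..-1} u \<ge> 0"
    using nn unfolding I_set_def by (intro integral_nonneg[OF has_integral_integrable[OF i1]]) auto
  moreover have "integral {1..2} u > 0"
  proof -
    have "integral {1..2} u \<ge> 0"
      using nn unfolding I_set_def by (intro integral_nonneg[OF has_integral_integrable[OF i2]]) auto
    moreover have "integral (cbox 1 2) u \<noteq> 0"
    proof
      assume "integral (cbox 1 2) u = 0"
      moreover have "continuous_on (cbox 1 2) u" using c2 by (simp add: cbox_interval)
      moreover have "box 1 (2::real) \<noteq> {}" by (simp add: box_real)
      moreover have "\<And>x. x \<in> cbox 1 2 \<Longrightarrow> u x \<ge> 0" using nn unfolding I_set_def cbox_interval by simp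
      ultimately have "\<forall>x\<in>cbox 1 2. u x = 0"
        using integral_cbox_eq_0_iff[of 1 2 u] by blast
      then have "u 1 = 0" by auto
      moreover have "u 1 > 0" using pos unfolding I_set_def by auto
      ultimately show False by simp
    qed
    ultimately show ?thesis by (simp add: cbox_interval)
  qed
  ultimately show ?thesis
    by (metis add_nonneg_pos has_integral_integrable integral_unique)
qed



lemma rhp_open: "open right_half_plane"
  unfolding right_half_plane_def by (rule open_halfspace_Re_gt)

lemma scale_holo:
  assumes holo: "\<phi> holomorphic_on right_half_plane" and T: "T > 0"
  shows "(\<lambda>\<xi>. \<phi> (complex_of_real T * \<xi>)) holomorphic_on right_half_plane"
proof -
  have "((\<lambda>\<xi>. \<phi> \<xi>) \<circ> (\<lambda>\<xi>. complex_of_real T * \<xi>)) holomorphic_on right_half_plane"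
    by (rule holomorphic_on_compose_gen[OF _ holo]) (auto intro!: holomorphic_intros simp: right_half_plane_def T)
  then show ?thesis by (simp add: o_def)
qed

lemma aux1: "\<bar>(u::real) - v\<bar> \<le> u/2 \<Longrightarrow> 0 < u \<Longrightarrow> 0 < v" by arith
lemma aux2: "\<bar>(u::real) - v\<bar> \<le> u/2 \<Longrightarrow> u \<le> 1/2 \<Longrightarrow> v < 4" by arith
lemma aux3: "\<bar>(y::real) - b\<bar> \<le> w \<Longrightarrow> w \<le> 1/4 \<Longrightarrow> 1 \<le> \<bar>y\<bar> \<and> \<bar>y\<bar> \<le> 2 \<Longrightarrow> -4 < b \<and> b < 4" by arith

lemma deriv_bound:
  fixes \<phi> :: "complex \<Rightarrow> complex"
  assumes holo: "\<phi> holomorphic_on right_half_plane"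
    and Hp: "H > 0" and ap: "\<alpha> > 0"
    and hold: "holder_Q1 H \<alpha> (\<lambda>\<xi>. \<phi> (complex_of_real T * \<xi>))"
    and Mb: "\<forall>\<xi>\<in>Qbox T - Qbox (T/8). \<forall>\<xi>'\<in>Qbox T - Qbox (T/8). cmod (\<phi> \<xi>) \<le> M * cmod (\<phi> \<xi>')"
    and T: "T \<ge> 2" and nz: "\<phi> (complex_of_real T) \<noteq> 0"
    and y: "y \<in> I_set"
  shows "cmod (deriv (rescaled \<phi> T) (Complex (1/T) y)) \<le> 8*M*H * T powr (1-\<alpha>)"
proof -
  define g where "g = (\<lambda>\<xi>. \<phi> (complex_of_real T * \<xi>))"
  define c where "c = cmod (\<phi> (complex_of_real T))"
  have cpos: "c > 0" using nz by (simp add: c_def)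
  have gh: "g holomorphic_on right_half_plane" unfolding g_def using scale_holo[OF holo] T by simp
  have TQ: "complex_of_real T \<in> Qbox T - Qbox (T/8)" using T by (simp add: Qbox_def)
  have M1: "M \<ge> 1"
  proof -
    have "c \<le> M * c" using Mb TQ unfolding c_def by blast
    then show ?thesis using cpos by simp
  qed
  have g1: "cmod (deriv g 1) \<le> 4 * M * c"
  proof -
    have sub: "cball 1 (1/4) \<subseteq> right_half_plane"
    proof
      fix x assume "x \<in> cball (1::complex) (1/4)"
      then have "cmod (1 - x) \<le> 1/4" by (simp add: dist_norm)
      moreover have "\<bar>Re (1 - x)\<bar> \<le> cmod (1 - x)" by (rule abs_Re_le_cmod)
      ultimately show "x \<in> right_half_plane" by (simp add: right_half_plane_def)
    qed
    have "cmod ((deriv ^^ 1) g 1) \<le> fact 1 * (M * c) / (1/4) ^ 1"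
    proof (rule Cauchy_inequality)
      show "g holomorphic_on ball 1 (1/4)" using gh sub ball_subset_cball holomorphic_on_subset by blast
      show "continuous_on (cball 1 (1/4)) g"
        using gh sub holomorphic_on_imp_continuous_on holomorphic_on_subset by blast
      fix x :: complex assume x: "cmod (1 - x) = 1/4"
      have a: "\<bar>Re (1 - x)\<bar> \<le> 1/4" using abs_Re_le_cmod[of "1-x"] x by simp
      have b: "\<bar>Im (1 - x)\<bar> \<le> 1/4" using abs_Im_le_cmod[of "1-x"] x by simp
      have ra: "\<bar>1 - Re x\<bar> \<le> 1/4" "\<bar>Im x\<bar> \<le> 1/4" using a b by simp_all
      have r: "3/4 \<le> Re x" "Re x \<le> 5/4" "-1/4 \<le> Im x" "Im x \<le> 1/4" using ra by arith+
      have "T*(3/4) \<le> T * Re x" "T * Re x \<le> T*(5/4)" "T*(-1/4) \<le> T * Im x" "T * Im x \<le> T*(1/4)"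
        using r T by (meson mult_left_mono less_le_trans zero_less_numeral less_imp_le order_trans zero_le_numeral)+
      then have "complex_of_real T * x \<in> Qbox T - Qbox (T/8)"
        using T by (auto simp: Qbox_def)
      then have "cmod (g x) \<le> M * c" using Mb TQ unfolding g_def c_def by blast
      then show "cmod (g x) \<le> M * c" .
    qed simp
    then show ?thesis by simp
  qed
  define \<xi>0 where "\<xi>0 = Complex (1/T) y"
  define \<rho> where "\<rho> = 1 / (2*T)"
  have \<rho>pos: "\<rho> > 0" using T by (simp add: \<rho>_def)
  define h where "h = rescaled \<phi> T"
  have h_eq: "h = (\<lambda>\<xi>. g \<xi> / complex_of_real c)"
    unfolding h_def rescaled_def g_def c_def by simp
  have hh: "h holomorphic_on right_half_plane"
    unfolding h_eq using gh by (auto intro!: holomorphic_intros)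
  have yb: "1 \<le> \<bar>y\<bar> \<and> \<bar>y\<bar> \<le> 2" using y by (auto simp: I_set_def)
  have iT: "0 < 1/T" "1/T \<le> 1/2" "1/(2*T) = (1/T)/2" using T by (auto simp: field_simps)
  have iT4: "1/T < 4" using iT(2) by linarith
  have x0Q: "\<xi>0 \<in> Qbox 1" using yb iT(1) iT4 by (auto simp: Qbox_def \<xi>0_def abs_le_iff)
  have \<xi>0R: "\<xi>0 \<in> right_half_plane" using T by (simp add: right_half_plane_def \<xi>0_def)
  define k where "k = (\<lambda>x. h x - h \<xi>0)"
  have sub2: "cball \<xi>0 \<rho> \<subseteq> right_half_plane"
  proof
    fix x assume "x \<in> cball \<xi>0 \<rho>"
    then have "cmod (\<xi>0 - x) \<le> \<rho>" by (simp add: dist_norm)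
    moreover have "\<bar>Re (\<xi>0 - x)\<bar> \<le> cmod (\<xi>0 - x)" by (rule abs_Re_le_cmod)
    ultimately have "\<bar>1/T - Re x\<bar> \<le> 1/(2*T)" by (simp add: \<xi>0_def \<rho>_def)
    then have "\<bar>1/T - Re x\<bar> \<le> (1/T)/2" using iT(3) by simp
    then have "0 < Re x" using iT(1) by (rule aux1)
    then show "x \<in> right_half_plane" by (simp add: right_half_plane_def)
  qed
  have kh: "k holomorphic_on right_half_plane"
    unfolding k_def using hh by (auto intro!: holomorphic_intros)
  have kb: "cmod ((deriv ^^ 1) k \<xi>0) \<le> fact 1 * (4 * M * H * \<rho> powr \<alpha>) / \<rho> ^ 1"
  proof (rule Cauchy_inequality)
    show "k holomorphic_on ball \<xi>0 \<rho>" using kh sub2 ball_subset_cball holomorphic_on_subset by blast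
    show "continuous_on (cball \<xi>0 \<rho>) k"
      using kh sub2 holomorphic_on_imp_continuous_on holomorphic_on_subset by blast
    show "0 < \<rho>" by (rule \<rho>pos)
    fix x :: complex assume x: "cmod (\<xi>0 - x) = \<rho>"
    have a: "\<bar>1/T - Re x\<bar> \<le> 1/(2*T)" using abs_Re_le_cmod[of "\<xi>0-x"] x by (simp add: \<xi>0_def \<rho>_def)
    have b: "\<bar>y - Im x\<bar> \<le> 1/(2*T)" using abs_Im_le_cmod[of "\<xi>0-x"] x by (simp add: \<xi>0_def \<rho>_def)
    have "1/(2*T) \<le> 1/4" using T by (simp add: field_simps)
    moreover have a': "\<bar>1/T - Re x\<bar> \<le> (1/T)/2" using a iT by simp
    ultimately have "0 < Re x" "Re x < 4" "-4 < Im x" "Im x < 4"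
      using aux1[OF a' iT(1)] aux2[OF a' iT(2)] aux3[OF b _ yb] by auto
    then have xQ: "x \<in> Qbox 1" by (simp add: Qbox_def)
    have "cmod (g x - g \<xi>0) \<le> H * cmod (deriv g 1) * cmod (x - \<xi>0) powr \<alpha>"
      using hold xQ x0Q unfolding holder_Q1_def g_def by blast
    also have "\<dots> \<le> H * (4 * M * c) * \<rho> powr \<alpha>"
      using g1 Hp x M1 cpos by (intro mult_mono) (auto simp: norm_minus_commute)
    finally have "cmod (g x - g \<xi>0) \<le> H * (4 * M * c) * \<rho> powr \<alpha>" .
    have "k x = (g x - g \<xi>0) / complex_of_real c" unfolding k_def h_eq by (simp add: diff_divide_distrib)
    then have "cmod (k x) = cmod (g x - g \<xi>0) / c" using cpos by (simp add: norm_divide)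
    also have "\<dots> \<le> (H * (4 * M * c) * \<rho> powr \<alpha>) / c"
      by (rule divide_right_mono[OF \<open>cmod (g x - g \<xi>0) \<le> H * (4 * M * c) * \<rho> powr \<alpha>\<close>]) (use cpos in simp)
    also have "\<dots> = 4 * M * H * \<rho> powr \<alpha>" using cpos by simp
    finally show "cmod (k x) \<le> 4 * M * H * \<rho> powr \<alpha>" .
  qed
  have dh: "(h has_field_derivative deriv h \<xi>0) (at \<xi>0)"
    using hh rhp_open \<xi>0R holomorphic_derivI by blast
  have "(k has_field_derivative deriv h \<xi>0 - 0) (at \<xi>0)"
    unfolding k_def by (rule DERIV_diff[OF dh DERIV_const])
  then have dk: "deriv k \<xi>0 = deriv h \<xi>0" by (simp add: DERIV_imp_deriv)
  have "cmod (deriv h \<xi>0) \<le> 4 * M * H * \<rho> powr \<alpha> / \<rho>"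
    using kb dk by simp
  also have "\<dots> = 4 * M * H * \<rho> powr (\<alpha> - 1)"
    using \<rho>pos by (simp add: powr_diff)
  also have "\<rho> powr (\<alpha> - 1) = 2 powr (1 - \<alpha>) * T powr (1 - \<alpha>)"
  proof -
    have "\<rho> powr (\<alpha> - 1) = (2*T) powr (1 - \<alpha>)"
    proof -
      have "\<rho> powr (\<alpha> - 1) = 1 / (2*T) powr (\<alpha> - 1)"
        unfolding \<rho>_def using T by (simp add: powr_divide)
      also have "\<dots> = (2*T) powr (- (\<alpha> - 1))" by (rule powr_minus_divide[symmetric])
      finally show ?thesis by simp
    qed
    also have "\<dots> = 2 powr (1 - \<alpha>) * T powr (1 - \<alpha>)" using T by (simp add: powr_mult)
    finally show ?thesis .
  qed
  also have "4 * M * H * (2 powr (1 - \<alpha>) * T powr (1 - \<alpha>)) \<le> 4 * M * H * (2 * T powr (1 - \<alpha>))"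
  proof -
    have "2 powr (1 - \<alpha>) \<le> 2 powr (1::real)" using ap by (intro powr_mono) auto
    then show ?thesis using M1 Hp by (intro mult_left_mono mult_right_mono) auto
  qed
  finally show ?thesis unfolding h_def \<xi>0_def by simp
qed



lemma rescaled_holo:
  assumes holo: "\<phi> holomorphic_on right_half_plane" and T: "T > 0"
  shows "rescaled \<phi> T holomorphic_on right_half_plane"
  unfolding rescaled_def using scale_holo[OF holo T] by (auto intro!: holomorphic_intros)

lemma rescaled_inj:
  assumes inj: "inj_on \<phi> right_half_plane" and T: "T > 0" and nz: "\<phi> (complex_of_real T) \<noteq> 0"
  shows "inj_on (rescaled \<phi> T) right_half_plane"
proof (rule inj_onI)
  fix x y assume x: "x \<in> right_half_plane" and y: "y \<in> right_half_plane"
    and eq: "rescaled \<phi> T x = rescaled \<phi> T y"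
  have "\<phi> (complex_of_real T * x) = \<phi> (complex_of_real T * y)"
    using eq nz unfolding rescaled_def by (simp add: divide_cancel_right)
  moreover have "complex_of_real T * x \<in> right_half_plane" "complex_of_real T * y \<in> right_half_plane"
    using x y T by (auto simp: right_half_plane_def)
  ultimately have "complex_of_real T * x = complex_of_real T * y" using inj by (auto dest: inj_onD)
  then show "x = y" using T by simp
qed

lemma beta_step:
  fixes \<phi> :: "complex \<Rightarrow> complex"
  assumes holo: "\<phi> holomorphic_on right_half_plane" and inj: "inj_on \<phi> right_half_plane"
    and Hp: "H > 0" and ap: "\<alpha> > 0"
    and hold: "holder_Q1 H \<alpha> (\<lambda>\<xi>. \<phi> (complex_of_real T * \<xi>))"
    and Mb: "\<forall>\<xi>\<in>Qbox T - Qbox (T/8). \<forall>\<xi>'\<in>Qbox T - Qbox (T/8). cmod (\<phi> \<xi>) \<le> M * cmod (\<phi> \<xi>')"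
    and T: "T \<ge> 2" and nz: "\<phi> (complex_of_real T) \<noteq> 0"
    and st: "0 < s" "s < t"
    and K: "8*M*H \<le> K" "1 \<le> K"
  shows "beta (rescaled \<phi> T) (1/T) t \<le> beta (rescaled \<phi> T) (1/T) s + (1-\<alpha>)*(t-s) + (t-s)*ln K/ln T"
proof -
  define h where "h = rescaled \<phi> T"
  define r where "r = 1/T"
  have Tp: "T > 0" using T by simp
  have rp: "r > 0" using T by (simp add: r_def)
  have hh: "h holomorphic_on right_half_plane" unfolding h_def using rescaled_holo[OF holo Tp] .
  have hi: "inj_on h right_half_plane" unfolding h_def using rescaled_inj[OF inj Tp nz] .
  have lineR: "Complex r y \<in> right_half_plane" for y using rp by (simp add: right_half_plane_def)
  have nd: "deriv h (Complex r y) \<noteq> 0" for y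
    using holomorphic_injective_imp_regular[OF hh rhp_open hi lineR] .
  define n where "n = (\<lambda>y. cmod (deriv h (Complex r y)))"
  have npos: "n y > 0" for y using nd by (simp add: n_def)
  have nne: "n y \<noteq> 0" for y using nd by (simp add: n_def)
  have cd: "continuous_on right_half_plane (deriv h)"
    using holomorphic_deriv[OF hh rhp_open] holomorphic_on_imp_continuous_on by blast
  have cl: "continuous_on UNIV (\<lambda>y::real. Complex r y)"
    unfolding Complex_eq by (intro continuous_intros)
  have cn: "continuous_on I_set n"
  proof -
    have "continuous_on UNIV (\<lambda>y. deriv h (Complex r y))"
      by (rule continuous_on_compose2[OF cd cl]) (use lineR in auto)
    then have "continuous_on UNIV n" unfolding n_def by (rule continuous_on_norm)
    then show ?thesis by (rule continuous_on_subset) auto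
  qed
  define D where "D = K * T powr (1-\<alpha>)"
  have Dpos: "D > 0" using K Tp by (simp add: D_def)
  have nb: "n y \<le> D" if "y \<in> I_set" for y
  proof -
    have "n y \<le> 8*M*H * T powr (1-\<alpha>)"
      unfolding n_def r_def h_def using deriv_bound[OF holo Hp ap hold Mb T nz that] .
    also have "\<dots> \<le> D" unfolding D_def using K by (intro mult_right_mono) auto
    finally show ?thesis .
  qed
  have up: "(\<lambda>y. n y powr p) integrable_on I_set \<and> integral I_set (\<lambda>y. n y powr p) > 0" for p
  proof (rule I_set_int)
    show "continuous_on I_set (\<lambda>y. n y powr p)"
      using cn nne by (intro continuous_intros) auto
    show "\<And>y. y \<in> I_set \<Longrightarrow> 0 < n y powr p" using nne by simp
  qed
  define At where "At = integral I_set (\<lambda>y. n y powr t)"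
  define As where "As = integral I_set (\<lambda>y. n y powr s)"
  have Atp: "At > 0" and Asp: "As > 0" using up unfolding At_def As_def by auto
  have "At \<le> integral I_set (\<lambda>y. D powr (t-s) * n y powr s)"
    unfolding At_def
  proof (rule integral_le)
    show "(\<lambda>y. n y powr t) integrable_on I_set" using up by blast
    show "(\<lambda>y. D powr (t-s) * n y powr s) integrable_on I_set"
      using up integrable_on_cmult_left[of "\<lambda>y. n y powr s" I_set "D powr (t-s)"] by (simp add: mult.commute)
    fix y assume y: "y \<in> I_set"
    have "n y powr t = n y powr (t-s) * n y powr s" by (simp add: powr_add[symmetric])
    also have "\<dots> \<le> D powr (t-s) * n y powr s"
      using nb[OF y] npos[of y] st by (intro mult_right_mono powr_mono2) auto
    finally show "n y powr t \<le> D powr (t-s) * n y powr s" .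
  qed
  also have "\<dots> = D powr (t-s) * As"
  proof -
    have "D powr (t-s) * As = integral I_set (\<lambda>y. D powr (t-s) * n y powr s)"
      unfolding As_def by (rule integral_mult) (use up in blast)
    then show ?thesis by (rule sym)
  qed
  finally have AtAs: "At \<le> D powr (t-s) * As" .
  have lnT: "ln T > 0" using T by simp
  have "ln At \<le> ln (D powr (t-s) * As)" using AtAs Atp by simp
  also have "\<dots> = (t-s) * ln D + ln As" using Dpos Asp by (simp add: ln_mult ln_powr)
  also have "ln D = ln K + (1-\<alpha>) * ln T" using K Tp by (simp add: D_def ln_mult ln_powr)
  finally have lnA: "ln At \<le> (t-s) * (ln K + (1-\<alpha>) * ln T) + ln As" .
  have "beta h r t = ln At / ln T" unfolding beta_def At_def n_def r_def by simp
  also have "\<dots> \<le> ((t-s) * (ln K + (1-\<alpha>) * ln T) + ln As) / ln T"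
    using lnA lnT by (simp add: divide_right_mono)
  also have "\<dots> = ln As / ln T + (1-\<alpha>)*(t-s) + (t-s)*ln K/ln T"
    using lnT by (simp add: field_simps)
  also have "ln As / ln T = beta h r s" unfolding beta_def As_def n_def r_def by simp
  finally show ?thesis unfolding h_def r_def .
qed



lemma tract_key:
  fixes \<phi> :: "complex \<Rightarrow> complex"
  assumes holo: "\<phi> holomorphic_on right_half_plane" and inj: "inj_on \<phi> right_half_plane"
    and ht: "holder_tract \<phi>"
  shows "\<exists>\<alpha>>0. \<forall>s t \<epsilon>. 0 < s \<longrightarrow> s < t \<longrightarrow> \<epsilon> > 0 \<longrightarrow>
           beta_inf \<phi> t \<le> beta_inf \<phi> s + ereal ((1-\<alpha>)*(t-s) + \<epsilon>)"
proof -
  obtain M where EM: "\<forall>\<^sub>F T in at_top. \<forall>\<xi>\<in>Qbox T - Qbox (T / 8). \<forall>\<xi>'\<in>Qbox T - Qbox (T / 8).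
          cmod (\<phi> \<xi>) \<le> M * cmod (\<phi> \<xi>')"
    using ht unfolding holder_tract_def by blast
  obtain H \<alpha> T0 where Hp: "H > 0" and ap: "\<alpha> > 0" and T0: "T0 \<ge> 1"
    and hold: "\<And>T. T \<ge> T0 \<Longrightarrow> holder_Q1 H \<alpha> (\<lambda>\<xi>. \<phi> (complex_of_real T * \<xi>))"
    using ht unfolding holder_tract_def by blast
  have ev_nz: "\<forall>\<^sub>F T in at_top. \<phi> (complex_of_real T) \<noteq> 0"
  proof (cases "\<exists>T1>0. \<phi> (complex_of_real T1) = 0")
    case True
    then obtain T1 where T1: "T1 > 0" "\<phi> (complex_of_real T1) = 0" by blast
    show ?thesis unfolding eventually_at_top_linorder
    proof (intro exI[of _ "T1+1"] allI impI)
      fix T :: real assume T: "T \<ge> T1 + 1"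
      show "\<phi> (complex_of_real T) \<noteq> 0"
      proof
        assume "\<phi> (complex_of_real T) = 0"
        then have "\<phi> (complex_of_real T) = \<phi> (complex_of_real T1)" using T1 by simp
        moreover have "complex_of_real T \<in> right_half_plane" "complex_of_real T1 \<in> right_half_plane"
          using T T1 by (auto simp: right_half_plane_def)
        ultimately have "complex_of_real T = complex_of_real T1" using inj by (auto dest: inj_onD)
        then show False using T by simp
      qed
    qed
  next
    case False
    show ?thesis using eventually_gt_at_top[of 0] by eventually_elim (use False in auto)
  qed
  show ?thesis
  proof (intro exI[of _ \<alpha>] conjI allI impI)
    show "\<alpha> > 0" by (rule ap)
    fix s t \<epsilon> :: real assume st: "0 < s" "s < t" and ep: "\<epsilon> > 0"
    define K where "K = max (8*M*H) 1"
    have K: "8*M*H \<le> K" "1 \<le> K" unfolding K_def by auto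
    define c where "c = (t-s) * ln K"
    have c0: "c \<ge> 0" unfolding c_def using st K by simp
    have ev_eps: "\<forall>\<^sub>F T in at_top. (t-s)*ln K/ln T \<le> \<epsilon>"
      using eventually_ge_at_top[of "max 2 (exp (c/\<epsilon>))"]
    proof eventually_elim
      case (elim T)
      then have T2: "T \<ge> 2" and Te: "exp (c/\<epsilon>) \<le> T" by auto
      have lnT: "ln T > 0" using T2 by simp
      have "ln (exp (c/\<epsilon>)) \<le> ln T" using Te T2 by (subst ln_le_cancel_iff) auto
      then have "c/\<epsilon> \<le> ln T" by simp
      then have "c \<le> \<epsilon> * ln T" using ep by (simp add: divide_le_eq mult.commute)
      then show ?case using lnT unfolding c_def[symmetric] by (simp add: divide_le_eq mult.commute)
    qed
    define bt where "bt = (\<lambda>T. ereal (beta (rescaled \<phi> T) (1/T) t))"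
    define bs where "bs = (\<lambda>T. ereal (beta (rescaled \<phi> T) (1/T) s))"
    have ev: "\<forall>\<^sub>F T in at_top. bt T \<le> bs T + ereal ((1-\<alpha>)*(t-s) + \<epsilon>)"
      using EM ev_nz ev_eps eventually_ge_at_top[of "max T0 2"]
    proof eventually_elim
      case (elim T)
      then have T2: "T \<ge> 2" and TT0: "T \<ge> T0" by auto
      have "beta (rescaled \<phi> T) (1/T) t \<le> beta (rescaled \<phi> T) (1/T) s + (1-\<alpha>)*(t-s) + (t-s)*ln K/ln T"
        by (rule beta_step[OF holo inj Hp ap hold[OF TT0] elim(1) T2 elim(2) st K])
      then have "beta (rescaled \<phi> T) (1/T) t \<le> beta (rescaled \<phi> T) (1/T) s + ((1-\<alpha>)*(t-s) + \<epsilon>)"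
        using elim(3) by linarith
      then show ?case unfolding bt_def bs_def by simp
    qed
    have "beta_inf \<phi> t = Limsup at_top bt" unfolding beta_inf_def bt_def by simp
    also have "\<dots> \<le> Limsup at_top (\<lambda>T. bs T + ereal ((1-\<alpha>)*(t-s) + \<epsilon>))"
      by (rule Limsup_mono[OF ev])
    also have "\<dots> = Limsup at_top bs + ereal ((1-\<alpha>)*(t-s) + \<epsilon>)"
      by (rule Limsup_add_ereal_right) auto
    also have "Limsup at_top bs = beta_inf \<phi> s" unfolding beta_inf_def bs_def by simp
    finally show "beta_inf \<phi> t \<le> beta_inf \<phi> s + ereal ((1-\<alpha>)*(t-s) + \<epsilon>)" .
  qed
qed

lemma tract_neg:
  fixes \<phi> :: "complex \<Rightarrow> complex"
  assumes holo: "\<phi> holomorphic_on right_half_plane" and inj: "inj_on \<phi> right_half_plane"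
    and ht: "holder_tract \<phi>" and t: "Theta_tract \<phi> < ereal t"
  shows "b_inf_tract \<phi> t < 0"
proof -
  obtain \<alpha> where ap: "\<alpha> > 0" and key: "\<And>s t \<epsilon>. 0 < s \<Longrightarrow> s < t \<Longrightarrow> \<epsilon> > 0 \<Longrightarrow>
           beta_inf \<phi> t \<le> beta_inf \<phi> s + ereal ((1-\<alpha>)*(t-s) + \<epsilon>)"
    using tract_key[OF holo inj ht] by blast
  obtain s where s: "s > 0" "b_inf_tract \<phi> s = 0" "ereal s < ereal t"
    using t unfolding Theta_tract_def Inf_less_iff by blast
  have st: "s < t" using s by simp
  define \<epsilon> where "\<epsilon> = \<alpha> * (t - s) / 2"
  have ep: "\<epsilon> > 0" using ap st by (simp add: \<epsilon>_def)
  have k: "beta_inf \<phi> t \<le> beta_inf \<phi> s + ereal ((1-\<alpha>)*(t-s) + \<epsilon>)"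
    using key[OF s(1) st ep] .
  obtain x where x: "beta_inf \<phi> s = ereal x"
    using s(2) unfolding b_inf_tract_def by (cases "beta_inf \<phi> s") auto
  have x1: "x - s + 1 = 0" using s(2) x unfolding b_inf_tract_def by simp
  show ?thesis
  proof (cases "beta_inf \<phi> t")
    case (real z)
    have "z \<le> x + ((1-\<alpha>)*(t-s) + \<epsilon>)" using k x real by simp
    moreover have e: "(1-\<alpha>)*(t-s) = (t-s) - \<alpha>*(t-s)" by (simp add: algebra_simps)
    moreover have a: "0 < \<alpha>*(t-s)" using ap st by simp
    ultimately have "z - t + 1 < 0" using x1 unfolding \<epsilon>_def by linarith
    then show ?thesis using real unfolding b_inf_tract_def by simp
  next
    case PInf
    then show ?thesis using k x by simp
  next
    case MInf
    then show ?thesis unfolding b_inf_tract_def by simp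
  qed
qed



lemma tract_props:
  assumes fh: "f holomorphic_on UNIV" and \<Omega>: "\<Omega> \<in> tracts f R"
    and lc: "log_coord f R \<Omega> \<tau>"
  shows "inv_coord \<Omega> \<tau> holomorphic_on right_half_plane \<and> inj_on (inv_coord \<Omega> \<tau>) right_half_plane"
proof -
  have oset: "open {z::complex. R < cmod z}"
  proof -
    have "{z::complex. R < cmod z} = - cball 0 R" by (auto simp: mem_cball_0)
    then show ?thesis using open_Compl[OF closed_cball[of 0 R]] by simp
  qed
  have "open (f -` {z. R < cmod z} \<inter> UNIV)"
    by (rule continuous_on_open_vimage[THEN iffD1, rule_format, OF open_UNIV holomorphic_on_imp_continuous_on[OF fh] oset])
  then have "open (f -` {z. R < cmod z})" by simp
  then have opn: "open \<Omega>" using \<Omega> unfolding tracts_def by (rule open_components)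
  have th: "\<tau> holomorphic_on \<Omega>" and bij: "bij_betw \<tau> \<Omega> right_half_plane" using lc unfolding log_coord_def by auto
  have inj: "inj_on \<tau> \<Omega>" and img: "\<tau> ` \<Omega> = right_half_plane" using bij by (auto simp: bij_betw_def)
  obtain g where gh: "g holomorphic_on (\<tau> ` \<Omega>)" and gi: "\<And>z. z \<in> \<Omega> \<Longrightarrow> g (\<tau> z) = z"
    using holomorphic_has_inverse[OF th opn inj] by metis
  have "inv_coord \<Omega> \<tau> holomorphic_on right_half_plane"
  proof (rule holomorphic_transform)
    show "g holomorphic_on right_half_plane" using gh img by simp
    fix w assume "w \<in> right_half_plane"
    then obtain z where z: "z \<in> \<Omega>" "w = \<tau> z" using img by blast
    show "g w = inv_coord \<Omega> \<tau> w" unfolding inv_coord_def using z gi inj by (simp add: inv_into_f_f)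
  qed
  moreover have "inj_on (inv_coord \<Omega> \<tau>) right_half_plane"
    unfolding inv_coord_def by (rule inj_on_inv_into) (simp add: img)
  ultimately show ?thesis by blast
qed

theorem proposition1p1:
  fixes f :: "complex \<Rightarrow> complex" and R :: real
    and \<tau> :: "complex set \<Rightarrow> complex \<Rightarrow> complex"
  assumes "class_B f"
    and "R \<ge> 1"
    and "singular_set f \<subseteq> ball 0 R"
    and "finite (tracts f R)"
    and "\<And>\<Omega>. \<Omega> \<in> tracts f R \<Longrightarrow> log_coord f R \<Omega> (\<tau> \<Omega>)"
    and "has_holder_tracts f R \<tau>"
  shows "negative_spectrum f R \<tau>"
proof -
  have fh: "f holomorphic_on UNIV" using assms(1) unfolding class_B_def by blast
  show ?thesis unfolding negative_spectrum_def
  proof (intro allI impI)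
    fix t :: real assume t: "Theta_f f R \<tau> < ereal t"
    have each: "b_inf_tract (inv_coord \<Omega> (\<tau> \<Omega>)) t < 0" if \<Omega>: "\<Omega> \<in> tracts f R" for \<Omega>
    proof -
      have p: "inv_coord \<Omega> (\<tau> \<Omega>) holomorphic_on right_half_plane \<and> inj_on (inv_coord \<Omega> (\<tau> \<Omega>)) right_half_plane"
        using tract_props[OF fh \<Omega> assms(5)[OF \<Omega>]] .
      have ht: "holder_tract (inv_coord \<Omega> (\<tau> \<Omega>))" using assms(6) \<Omega> unfolding has_holder_tracts_def by blast
      have "Theta_tract (inv_coord \<Omega> (\<tau> \<Omega>)) \<le> Theta_f f R \<tau>"
        unfolding Theta_f_def using \<Omega> by (rule SUP_upper)
      then have "Theta_tract (inv_coord \<Omega> (\<tau> \<Omega>)) < ereal t" using t by (rule le_less_trans)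
      then show ?thesis using tract_neg p ht by blast
    qed
    show "b_inf f R \<tau> t < 0"
    proof (cases "tracts f R = {}")
      case True
      then show ?thesis unfolding b_inf_def by (simp add: bot_ereal_def)
    next
      case False
      let ?S = "(\<lambda>\<Omega>. b_inf_tract (inv_coord \<Omega> (\<tau> \<Omega>)) t) ` tracts f R"
      have "b_inf f R \<tau> t = Max ?S"
        unfolding b_inf_def using assms(4) False by (intro cSup_eq_Max) auto
      also have "\<dots> < 0" using assms(4) False each by (subst Max_less_iff) auto
      finally show ?thesis .
    qed
  qed
qed

end
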